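(* Assume the standing setting below and let $\{(x_k,\lambda_k)\}_{k\ge0}$ and directions $p_k$ ($k\ge1$) be generated by the Projected Newton iteration, where for each $k\ge1$ the step-length $\gamma_k\in(0,1]$ satisfies $\lambda_k>0$, the sufficient decrease condition $$\tfrac12\|F(x_k,\lambda_k)\|^2\le\left(\tfrac12-c\gamma_k\right)\|F(x_{k-1},\lambda_{k-1})\|^2$$ for a fixed $c\in(0,1)$, and the lower bound $$\gamma_k\ge\min\left(1,\ \frac{2(1-c)\tau\|F(x_{k-1},\lambda_{k-1})\|^2}{\zeta\|p_k\|^2}\right)$$ for fixed constants $\tau\in(0,1)$ and $\zeta>0$ (whenever $F(x_{k-1},\lambda_{k-1})\ne0$). Then either $\|F(x_k,\lambda_k)\|=0$ for some $k\ge0$, or $$\lim_{k\to\infty}\min\left(\|F(x_k,\lambda_k)\|,\ \frac{\|F(x_k,\lambda_k)\|^2}{\|p_{k+1}\|}\right)=0.$$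
   Context: Standing setting. $A\in\mathbb{R}^{m\times n}$ ($m\ge n$), $b\in\mathbb{R}^m$ with $\|b\|\ge\sigma>0$. $F(x,\lambda)=\begin{pmatrix}\lambda A^T(Ax-b)+x\\ \tfrac12\|Ax-b\|^2-\tfrac{\sigma^2}{2}\end{pmatrix}$. Golub–Kahan bidiagonalization (Bidiag1): $u_0=b/\|b\|$, $\nu_0v_{-1}=0$, for $j=0,1,\dots$: $r_j=A^Tu_j-\nu_jv_{j-1}$, $\mu_j=\|r_j\|$, $v_j=r_j/\mu_j$, $p_j=Av_j-\mu_ju_j$, $\nu_{j+1}=\|p_j\|$, $u_{j+1}=p_j/\nu_{j+1}$; no breakdown (all $\mu_j,\nu_j>0$) and exact orthonormality of $\{v_j\}$ and $\{u_j\}$ are assumed. $V_k=[v_0,\dots,v_{k-1}]$; $B_{k+1,k}\in\mathbb{R}^{(k+1)\times k}$ lower bidiagonal with diagonal $\mu_0,\dots,\mu_{k-1}$, subdiagonal $\nu_1,\dots,\nu_k$; $c_{k+1}=(\|b\|,0,\dots,0)^T\in\mathbb{R}^{k+1}$. $F^{(k)}(y,\lambda)=\begin{pmatrix}\lambda B_{k+1,k}^T(B_{k+1,k}y-c_{k+1})+y\\ \tfrac12\|B_{k+1,k}y-c_{k+1}\|^2-\tfrac{\sigma^2}{2}\end{pmatrix}$, $J^{(k)}$ its Jacobian in $(y,\lambda)$. Projected Newton iteration: $\lambda_0>0$, $x_0=0$, $\bar y_0=0\in\mathbb{R}^1$. For $k\ge1$: $(\Delta y_k,\Delta\lambda_k)=-J^{(k)}(\bar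 y_{k-1},\lambda_{k-1})^{-1}F^{(k)}(\bar y_{k-1},\lambda_{k-1})$, $p_k=(V_k\Delta y_k,\Delta\lambda_k)\in\mathbb{R}^{n+1}$, $y_k=\bar y_{k-1}+\gamma_k\Delta y_k$, $\lambda_k=\lambda_{k-1}+\gamma_k\Delta\lambda_k$, $\bar y_k=(y_k^T,0)^T$, $x_k=V_ky_k$. *)

theory Defs
  imports "HOL-Analysis.Analysis"
begin

text \<open>Vectors of (varying) dimension d are represented as functions nat => real,
  only the entries with index < d being relevant; matrices as nat => nat => real.\<close>

definition sqn :: "nat \<Rightarrow> (nat \<Rightarrow> real) \<Rightarrow> real" where
  "sqn d x = (\<Sum>i<d. (x i)^2)"

definition vn :: "nat \<Rightarrow> (nat \<Rightarrow> real) \<Rightarrow> real" where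
  "vn d x = sqrt (sqn d x)"

definition mv :: "(nat \<Rightarrow> nat \<Rightarrow> real) \<Rightarrow> nat \<Rightarrow> (nat \<Rightarrow> real) \<Rightarrow> nat \<Rightarrow> real" where
  "mv M d x = (\<lambda>i. \<Sum>j<d. M i j * x j)"

definition tmv :: "(nat \<Rightarrow> nat \<Rightarrow> real) \<Rightarrow> nat \<Rightarrow> (nat \<Rightarrow> real) \<Rightarrow> nat \<Rightarrow> real" where
  "tmv M r y = (\<lambda>j. \<Sum>i<r. M i j * y i)"

text \<open>First block of F: lam M^T (M x - c) + x  (M is r x d)\<close>
definition Fgrad :: "(nat \<Rightarrow> nat \<Rightarrow> real) \<Rightarrow> nat \<Rightarrow> nat \<Rightarrow> (nat \<Rightarrow> real) \<Rightarrow> (nat \<Rightarrow> real) \<Rightarrow> real \<Rightarrow> nat \<Rightarrow> real" where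
  "Fgrad M r d c x lam = (\<lambda>j. lam * tmv M r (\<lambda>i. mv M d x i - c i) j + x j)"

text \<open>Last entry of F: 1/2 ||M x - c||^2 - sigma^2/2\<close>
definition Fsec :: "(nat \<Rightarrow> nat \<Rightarrow> real) \<Rightarrow> nat \<Rightarrow> nat \<Rightarrow> (nat \<Rightarrow> real) \<Rightarrow> real \<Rightarrow> (nat \<Rightarrow> real) \<Rightarrow> real" where
  "Fsec M r d c \<sigma> x = sqn r (\<lambda>i. mv M d x i - c i) / 2 - \<sigma>^2 / 2"

definition Fnorm :: "(nat \<Rightarrow> nat \<Rightarrow> real) \<Rightarrow> nat \<Rightarrow> nat \<Rightarrow> (nat \<Rightarrow> real) \<Rightarrow> real \<Rightarrow> (nat \<Rightarrow> real) \<Rightarrow> real \<Rightarrow> real" where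
  "Fnorm M r d c \<sigma> x lam = sqrt (sqn d (Fgrad M r d c x lam) + (Fsec M r d c \<sigma> x)^2)"

text \<open>Lower bidiagonal matrix: diagonal mu_0, mu_1, ..., subdiagonal nu_1, nu_2, ...;
  B_{k+1,k} is its leading (k+1) x k block.\<close>
definition bidiag :: "(nat \<Rightarrow> real) \<Rightarrow> (nat \<Rightarrow> real) \<Rightarrow> nat \<Rightarrow> nat \<Rightarrow> real" where
  "bidiag \<mu> \<nu> = (\<lambda>i j. if i = j then \<mu> j else if i = Suc j then \<nu> i else 0)"

definition cvec :: "real \<Rightarrow> nat \<Rightarrow> real" where
  "cvec \<beta> = (\<lambda>i. if i = 0 then \<beta> else 0)"

text \<open>Projected map F^(k) as a map R^(k+1) -> R^(k+1); a point z encodes (y, lam)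
  with y = (z 0, ..., z (k-1)) and lam = z k; component i (i \<le> k).\<close>
definition Fproj :: "(nat \<Rightarrow> real) \<Rightarrow> (nat \<Rightarrow> real) \<Rightarrow> real \<Rightarrow> real \<Rightarrow> nat \<Rightarrow> (nat \<Rightarrow> real) \<Rightarrow> nat \<Rightarrow> real" where
  "Fproj \<mu> \<nu> \<beta> \<sigma> k z i =
     (if i < k then Fgrad (bidiag \<mu> \<nu>) (Suc k) k (cvec \<beta>) z (z k) i
      else Fsec (bidiag \<mu> \<nu>) (Suc k) k (cvec \<beta>) \<sigma> z)"

definition Jproj :: "(nat \<Rightarrow> real) \<Rightarrow> (nat \<Rightarrow> real) \<Rightarrow> real \<Rightarrow> real \<Rightarrow> nat \<Rightarrow> (nat \<Rightarrow> real) \<Rightarrow> nat \<Rightarrow> nat \<Rightarrow> real" where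
  "Jproj \<mu> \<nu> \<beta> \<sigma> k z i j = deriv (\<lambda>t. Fproj \<mu> \<nu> \<beta> \<sigma> k (z(j := z j + t)) i) 0"

definition Japply :: "(nat \<Rightarrow> real) \<Rightarrow> (nat \<Rightarrow> real) \<Rightarrow> real \<Rightarrow> real \<Rightarrow> nat \<Rightarrow> (nat \<Rightarrow> real) \<Rightarrow> (nat \<Rightarrow> real) \<Rightarrow> nat \<Rightarrow> real" where
  "Japply \<mu> \<nu> \<beta> \<sigma> k z d i = (\<Sum>j\<le>k. Jproj \<mu> \<nu> \<beta> \<sigma> k z i j * d j)"

definition Jnonsing :: "(nat \<Rightarrow> real) \<Rightarrow> (nat \<Rightarrow> real) \<Rightarrow> real \<Rightarrow> real \<Rightarrow> nat \<Rightarrow> (nat \<Rightarrow> real) \<Rightarrow> bool" where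
  "Jnonsing \<mu> \<nu> \<beta> \<sigma> k z =
     (\<forall>d. (\<forall>i\<le>k. Japply \<mu> \<nu> \<beta> \<sigma> k z d i = 0) \<longrightarrow> (\<forall>j\<le>k. d j = 0))"

text \<open>The point (ybar_{k-1}, lam_{k-1}) in R^(k+1): ybar_{k-1} = (y_{k-1}, 0) (and ybar_0 = 0).\<close>
definition zprev :: "(nat \<Rightarrow> nat \<Rightarrow> real) \<Rightarrow> (nat \<Rightarrow> real) \<Rightarrow> nat \<Rightarrow> nat \<Rightarrow> real" where
  "zprev y lam k = (\<lambda>j. if j < k - 1 then y (k - 1) j else if j = k then lam (k - 1) else 0)"

text \<open>||p_k|| where p_k = (V_k dy, dlam), dy = (d 0, ..., d (k-1)), dlam = d k,
  and V_k has columns v 0, ..., v (k-1) in R^n.\<close>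
definition pnorm :: "nat \<Rightarrow> (nat \<Rightarrow> nat \<Rightarrow> real) \<Rightarrow> nat \<Rightarrow> (nat \<Rightarrow> real) \<Rightarrow> real" where
  "pnorm n v k d = sqrt (sqn n (\<lambda>i. \<Sum>j<k. v j i * d j) + (d k)^2)"

end

theory Submission
  imports Defs
begin

theorem theorem4p2:
  fixes m n :: nat and A :: "nat \<Rightarrow> nat \<Rightarrow> real" and b :: "nat \<Rightarrow> real" and \<sigma> :: real
    and u v :: "nat \<Rightarrow> nat \<Rightarrow> real" and \<mu> \<nu> :: "nat \<Rightarrow> real"
    and x y dl :: "nat \<Rightarrow> nat \<Rightarrow> real" and lam \<gamma> :: "nat \<Rightarrow> real"
    and c \<tau> \<zeta> :: real
  assumes mn: "n \<le> m"
    and sig: "0 < \<sigma>" "\<sigma> \<le> vn m b"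
    and u0: "\<forall>i<m. u 0 i = b i / vn m b"
    and mu_def: "\<forall>j. \<mu> j = vn n (\<lambda>i. tmv A m (u j) i - (if j = 0 then 0 else \<nu> j * v (j - 1) i))"
    and v_def: "\<forall>j. \<forall>i<n. v j i = (tmv A m (u j) i - (if j = 0 then 0 else \<nu> j * v (j - 1) i)) / \<mu> j"
    and nu_def: "\<forall>j. \<nu> (Suc j) = vn m (\<lambda>i. mv A n (v j) i - \<mu> j * u j i)"
    and u_def: "\<forall>j. \<forall>i<m. u (Suc j) i = (mv A n (v j) i - \<mu> j * u j i) / \<nu> (Suc j)"
    and nobreak: "\<forall>j<n. 0 < \<mu> j" "\<forall>j. 1 \<le> j \<and> j < n \<longrightarrow> 0 < \<nu> j"
    and orth_v: "\<forall>j<n. \<forall>l<n. (\<Sum>i<n. v j i * v l i) = (if j = l then 1 else 0)"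
    and orth_u: "\<forall>j<n. \<forall>l<n. (\<Sum>i<m. u j i * u l i) = (if j = l then 1 else 0)"
    and lam0: "0 < lam 0"
    and x0: "\<forall>i<n. x 0 i = 0"
    and newton: "\<forall>k\<ge>1. Jnonsing \<mu> \<nu> (vn m b) \<sigma> k (zprev y lam k) \<and>
        (\<forall>i\<le>k. Japply \<mu> \<nu> (vn m b) \<sigma> k (zprev y lam k) (dl k) i
                 = - Fproj \<mu> \<nu> (vn m b) \<sigma> k (zprev y lam k) i)"
    and step: "\<forall>k\<ge>1. (\<forall>j<k. y k j = zprev y lam k j + \<gamma> k * dl k j) \<and>
        lam k = lam (k - 1) + \<gamma> k * dl k k"
    and xk: "\<forall>k\<ge>1. \<forall>i<n. x k i = (\<Sum>j<k. v j i * y k j)"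
    and c: "0 < c" "c < 1"
    and \<tau>: "0 < \<tau>" "\<tau> < 1"
    and \<zeta>: "0 < \<zeta>"
    and gam: "\<forall>k\<ge>1. 0 < \<gamma> k \<and> \<gamma> k \<le> 1 \<and> 0 < lam k \<and>
        (1/2) * (Fnorm A m n b \<sigma> (x k) (lam k))^2
          \<le> (1/2 - c * \<gamma> k) * (Fnorm A m n b \<sigma> (x (k - 1)) (lam (k - 1)))^2 \<and>
        (Fnorm A m n b \<sigma> (x (k - 1)) (lam (k - 1)) \<noteq> 0 \<longrightarrow>
          \<gamma> k \<ge> min 1 (2 * (1 - c) * \<tau> * (Fnorm A m n b \<sigma> (x (k - 1)) (lam (k - 1)))^2
                        / (\<zeta> * (pnorm n v k (dl k))^2)))"
  shows "(\<exists>k. Fnorm A m n b \<sigma> (x k) (lam k) = 0) \<or>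
         (\<lambda>k. min (Fnorm A m n b \<sigma> (x k) (lam k))
                   ((Fnorm A m n b \<sigma> (x k) (lam k))^2 / pnorm n v (Suc k) (dl (Suc k))))
           \<longlonglongrightarrow> 0"
proof -
  define F where "F k = Fnorm A m n b \<sigma> (x k) (lam k)" for k
  define f where "f k = (F k)^2" for k
  define P where "P k = pnorm n v k (dl k)" for k
  define K where "K = 2 * (1 - c) * \<tau> / \<zeta>"
  define C where "C = max 1 (1/K)"
  define g where "g k = min (F k) ((F k)^2 / P (Suc k))" for k
  have Kpos: "K > 0" using c \<tau> \<zeta> by (simp add: K_def)
  have Fnn: "F k \<ge> 0" for k by (simp add: F_def Fnorm_def sqn_def sum_nonneg)
  have Pnn: "P k \<ge> 0" for k by (simp add: P_def pnorm_def sqn_def sum_nonneg)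
  have fnn: "f k \<ge> 0" for k by (simp add: f_def)
  have G: "0 < \<gamma> (Suc k) \<and> \<gamma> (Suc k) \<le> 1 \<and>
        (1/2) * f (Suc k) \<le> (1/2 - c * \<gamma> (Suc k)) * f k \<and>
        (F k \<noteq> 0 \<longrightarrow> \<gamma> (Suc k) \<ge> min 1 (2 * (1 - c) * \<tau> * f k / (\<zeta> * (P (Suc k))^2)))" for k
    using gam[rule_format, of "Suc k"] by (simp add: F_def f_def P_def)
  have key: "\<gamma> (Suc k) * f k \<le> (f k - f (Suc k)) / (2 * c)" for k
  proof -
    from G[of k] have "f (Suc k) \<le> (1 - 2 * c * \<gamma> (Suc k)) * f k" by (simp add: algebra_simps)
    then show ?thesis using c by (simp add: field_simps)
  qed
  have dec: "f (Suc k) \<le> f k" for k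
  proof -
    have "0 \<le> \<gamma> (Suc k) * f k" using G[of k] fnn[of k] by simp
    then have "0 \<le> (f k - f (Suc k)) / (2 * c)" using key[of k] by linarith
    then show ?thesis using c by (simp add: zero_le_divide_iff)
  qed
  have "decseq f" by (rule decseq_SucI) (use dec in auto)
  then obtain L where "f \<longlonglongrightarrow> L" "\<forall>i. L \<le> f i"
    by (rule decseq_convergent[of f 0]) (use fnn in auto)
  then have fL: "f \<longlonglongrightarrow> L" by simp
  have fSL: "(\<lambda>k. f (Suc k)) \<longlonglongrightarrow> L" using LIMSEQ_Suc[OF fL] .
  have "(\<lambda>k. (f k - f (Suc k)) / (2 * c)) \<longlonglongrightarrow> (L - L) / (2 * c)"
    by (intro tendsto_divide tendsto_diff fL fSL tendsto_const) (use c in simp)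
  then have d0: "(\<lambda>k. (f k - f (Suc k)) / (2 * c)) \<longlonglongrightarrow> 0" by simp
  have gf: "(\<lambda>k. \<gamma> (Suc k) * f k) \<longlonglongrightarrow> 0"
  proof (rule real_tendsto_sandwich[OF _ _ tendsto_const d0])
    show "\<forall>\<^sub>F k in sequentially. 0 \<le> \<gamma> (Suc k) * f k"
      using G fnn by (intro always_eventually allI mult_nonneg_nonneg) (auto intro: less_imp_le)
    show "\<forall>\<^sub>F k in sequentially. \<gamma> (Suc k) * f k \<le> (f k - f (Suc k)) / (2 * c)"
      using key by (intro always_eventually allI)
  qed
  have gnn: "g k \<ge> 0" for k using Fnn Pnn by (simp add: g_def)
  have Cpos: "C > 0" by (simp add: C_def)
  have C1: "1 \<le> C" and CK: "1 / K \<le> C" by (auto simp: C_def)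
  have bnd: "(g k)^2 \<le> C * (\<gamma> (Suc k) * f k)" for k
  proof -
    have r0: "0 \<le> C * (\<gamma> (Suc k) * f k)" using Cpos G[of k] fnn[of k] by simp
    have gF: "g k \<le> F k" by (simp add: g_def)
    have gP: "g k \<le> (F k)^2 / P (Suc k)" by (simp add: g_def)
    show ?thesis
    proof (cases "F k = 0 \<or> P (Suc k) = 0")
      case True
      then have "g k = 0" using gnn[of k] gF gP by auto
      then show ?thesis using r0 by simp
    next
      case False
      then have Fn: "F k \<noteq> 0" and Pp: "P (Suc k) > 0" using Pnn[of "Suc k"] by auto
      have eq: "2 * (1 - c) * \<tau> * f k / (\<zeta> * (P (Suc k))^2) = K * f k / (P (Suc k))^2"
        by (simp add: K_def)
      have gm: "\<gamma> (Suc k) \<ge> min 1 (K * f k / (P (Suc k))^2)" using G[of k] Fn eq by simp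
      show ?thesis
      proof (cases "1 \<le> K * f k / (P (Suc k))^2")
        case True
        then have g1: "\<gamma> (Suc k) \<ge> 1" using gm by simp
        have "(g k)^2 \<le> (F k)^2" using gF gnn[of k] by (simp add: power_mono)
        also have "\<dots> = f k" by (simp add: f_def)
        also have "\<dots> \<le> \<gamma> (Suc k) * f k" using mult_right_mono[OF g1 fnn[of k]] by simp
        also have "\<dots> \<le> C * (\<gamma> (Suc k) * f k)" using mult_right_mono[OF C1, of "\<gamma> (Suc k) * f k"] G[of k] fnn[of k] by simp
        finally show ?thesis .
      next
        case False
        then have g1: "\<gamma> (Suc k) \<ge> K * f k / (P (Suc k))^2" using gm by simp
        have "(g k)^2 \<le> ((F k)^2 / P (Suc k))^2" using gP gnn[of k] by (simp add: power_mono)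
        also have "\<dots> = f k * f k / (P (Suc k))^2" by (simp add: f_def power2_eq_square)
        also have "\<dots> = (1/K) * ((K * f k / (P (Suc k))^2) * f k)" using Kpos by simp
        also have "\<dots> \<le> (1/K) * (\<gamma> (Suc k) * f k)"
          using g1 fnn[of k] Kpos by (intro mult_left_mono mult_right_mono) auto
        also have "\<dots> \<le> C * (\<gamma> (Suc k) * f k)" using CK G[of k] fnn[of k]
          by (intro mult_right_mono) auto
        finally show ?thesis .
      qed
    qed
  qed
  have "(\<lambda>k. C * (\<gamma> (Suc k) * f k)) \<longlonglongrightarrow> C * 0" by (intro tendsto_intros gf)
  have "(\<lambda>k. (g k)^2) \<longlonglongrightarrow> 0"
  proof (rule real_tendsto_sandwich[OF _ _ tendsto_const])
    show "\<forall>\<^sub>F k in sequentially. 0 \<le> (g k)^2" by simp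
    show "\<forall>\<^sub>F k in sequentially. (g k)^2 \<le> C * (\<gamma> (Suc k) * f k)"
      using bnd by (intro always_eventually allI)
    show "(\<lambda>k. C * (\<gamma> (Suc k) * f k)) \<longlonglongrightarrow> 0" using \<open>_ \<longlonglongrightarrow> C * 0\<close> by simp
  qed
  then have "(\<lambda>k. sqrt ((g k)^2)) \<longlonglongrightarrow> sqrt 0" by (intro tendsto_intros)
  then have "g \<longlonglongrightarrow> 0" using gnn by simp
  moreover have "g = (\<lambda>k. min (Fnorm A m n b \<sigma> (x k) (lam k))
                   ((Fnorm A m n b \<sigma> (x k) (lam k))^2 / pnorm n v (Suc k) (dl (Suc k))))"
    by (simp add: fun_eq_iff g_def F_def P_def)
  ultimately show ?thesis by simp
qed

end
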